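(* Let $n\ge0$ and let $f$ be a stable real-rational all-pass function of order $n$ with unit gain ($|f(e^{j\omega})|=1$ for all $\omega$) all of whose poles are real (no poles if $n=0$). Then for every $\omega_p\in(-\pi,\pi)\setminus\{0\}$, $$\theta_f'(\omega_p)\le-\left|\frac{\sin(\theta_f(\omega_p))}{\sin\omega_p}\right|,$$ and equality holds for all such $\omega_p$ when $n=0$ or $n=1$.
   Context: Stable means all poles in the open unit disk. $\theta_f(\omega):=\angle f(e^{j\omega})$ is a continuous choice of argument and $\theta_f'(\omega)$ its derivative with respect to $\omega$ (the quantity $\sin\theta_f(\omega_p)$ is independent of the branch). *)

theory Defs
  imports "HOL-Analysis.Analysis" "HOL-Computational_Algebra.Computational_Algebra"
begin

definition ratf :: "real poly \<Rightarrow> real poly \<Rightarrow> complex \<Rightarrow> complex" where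
  "ratf p q z = poly (map_poly complex_of_real p) z / poly (map_poly complex_of_real q) z"

text \<open>f = p/q (coprime real polynomials) is a stable (proper, all poles in the open unit disk)
  real-rational all-pass function of order n (McMillan degree max(deg p, deg q)) with unit gain,
  all of whose poles are real.\<close>
definition stable_real_pole_allpass :: "real poly \<Rightarrow> real poly \<Rightarrow> nat \<Rightarrow> bool" where
  "stable_real_pole_allpass p q n \<longleftrightarrow>
     q \<noteq> 0 \<and> coprime p q \<and> degree p \<le> degree q \<and> max (degree p) (degree q) = n \<and>
     (\<forall>z. poly (map_poly complex_of_real q) z = 0 \<longrightarrow> z \<in> \<real> \<and> norm z < 1) \<and>
     (\<forall>w::real. norm (ratf p q (cis w)) = 1)"

end

theory Submission
  imports Defs "HOL-Computational_Algebra.Field_as_Ring"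
begin
abbreviation cp :: "real poly \<Rightarrow> complex poly" where "cp \<equiv> map_poly complex_of_real"

lemma cp_mult: "cp (a*b) = cp a * cp b"
  by (intro poly_eqI) (simp add: coeff_map_poly coeff_mult)
lemma cp_add: "cp (a+b) = cp a + cp b"
  by (intro poly_eqI) (simp add: coeff_map_poly)
lemma cp_diff: "cp (a-b) = cp a - cp b"
  by (intro poly_eqI) (simp add: coeff_map_poly)
lemma cp_smult: "cp (smult c a) = smult (of_real c) (cp a)"
  by (intro poly_eqI) (simp add: coeff_map_poly)
lemma cp_pCons: "cp (pCons c a) = pCons (of_real c) (cp a)"
  by (simp add: map_poly_pCons)
lemma cp_eq0: "cp a = 0 \<longleftrightarrow> a = 0"
  by (simp add: map_poly_eq_0_iff)
lemma cp_reflect: "cp (reflect_poly a) = reflect_poly (cp a)"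
  by (intro poly_eqI) (simp add: coeff_map_poly coeff_reflect_poly degree_map_poly)
lemma cp_monom: "cp (monom c k) = monom (of_real c) k"
  by (simp add: map_poly_monom)
lemma cp_cnj: "poly (cp a) (cnj z) = cnj (poly (cp a) z)"
  by (subst poly_cnj_real) (auto simp: coeff_map_poly)
lemma cp_prod1: "poly (cp (\<Prod>a\<leftarrow>as. [:-a,1:])) z = (\<Prod>a\<leftarrow>as. z - of_real a)"
proof (induction as)
  case (Cons a as) then show ?case
    by (simp only: list.map prod_list.Cons cp_mult poly_mult) (simp add: cp_pCons)
qed simp
lemma cp_prod2: "poly (cp (\<Prod>a\<leftarrow>as. [:1,-a:])) z = (\<Prod>a\<leftarrow>as. 1 - of_real a * z)"
proof (induction as)
  case (Cons a as) then show ?case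
    by (simp only: list.map prod_list.Cons cp_mult poly_mult) (simp add: cp_pCons)
qed simp

lemma cp_of_real: "poly (cp q) (of_real x) = of_real (poly q x)"
  by (induction q) (simp_all add: cp_pCons)

lemma real_factor:
  fixes q :: "real poly"
  assumes "q \<noteq> 0" "\<forall>z. poly (cp q) z = 0 \<longrightarrow> z \<in> \<real> \<and> norm z < 1"
  shows "\<exists>as. q = smult (lead_coeff q) (\<Prod>a\<leftarrow>as. [:-a,1:]) \<and> length as = degree q \<and> (\<forall>a\<in>set as. \<bar>a\<bar> < 1)"
  using assms
proof (induction "degree q" arbitrary: q)
  case 0
  then have "q = [:coeff q 0:]" by (metis degree_0_id)
  then show ?case using 0 by (intro exI[of _ "[]"]) simp
next
  case (Suc n)
  have "\<not> (\<exists>a l. a \<noteq> 0 \<and> l = 0 \<and> cp q = pCons a l)"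
  proof
    assume "\<exists>a l. a \<noteq> 0 \<and> l = 0 \<and> cp q = pCons a l"
    then have "degree (cp q) = 0" by auto
    then show False using Suc(2) by (simp add: degree_map_poly)
  qed
  from fundamental_theorem_of_algebra_alt[OF this] obtain z where z: "poly (cp q) z = 0" by blast
  have "z \<in> \<real>" "norm z < 1" using Suc(4) z by auto
  then obtain a where za: "z = of_real a" and "norm z < 1" by (metis Reals_cases)
  then have a1: "\<bar>a\<bar> < 1" by simp
  have "poly q a = 0" using z za cp_of_real[of q a] by simp
  then obtain q1 where q1: "q = [:-a,1:] * q1" using poly_eq_0_iff_dvd by (metis dvdE)
  have q1nz: "q1 \<noteq> 0" using q1 Suc(3) by auto
  have dq1: "n = degree q1" proof -
    have "degree q = degree [:-a,1::real:] + degree q1" unfolding q1 by (rule degree_mult_eq) (use q1nz in auto)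
    then show ?thesis using Suc(2) by simp
  qed
  have r1: "\<forall>z. poly (cp q1) z = 0 \<longrightarrow> z \<in> \<real> \<and> norm z < 1"
  proof (intro allI impI)
    fix z assume "poly (cp q1) z = 0"
    then have "poly (cp q) z = 0" unfolding q1 cp_mult poly_mult by simp
    then show "z \<in> \<real> \<and> norm z < 1" using Suc(4) by blast
  qed
  from Suc(1)[OF dq1 q1nz r1] obtain as where as: "q1 = smult (lead_coeff q1) (\<Prod>a\<leftarrow>as. [:-a,1:])"
    "length as = degree q1" "\<forall>a\<in>set as. \<bar>a\<bar> < 1" by blast
  have lc: "lead_coeff q = lead_coeff q1" unfolding q1 lead_coeff_mult by simp
  show ?case
  proof (intro exI[of _ "a#as"] conjI)
    show "q = smult (lead_coeff q) (\<Prod>a\<leftarrow>a#as. [:-a,1:])"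
    proof -
      have "[:-a,1:] * q1 = [:-a,1:] * smult (lead_coeff q1) (\<Prod>a\<leftarrow>as. [:-a,1:])"
        using as(1) by (rule arg_cong)
      then have "q = [:-a,1:] * smult (lead_coeff q1) (\<Prod>a\<leftarrow>as. [:-a,1:])" using q1 by simp
      then show ?thesis unfolding lc by (simp add: mult_smult_right)
    qed
  next
    show "length (a#as) = degree q" using as(2) Suc(2) dq1 by simp
  next
    show "\<forall>b\<in>set (a#as). \<bar>b\<bar> < 1" using as(3) a1 by simp
  qed
qed

lemma circle_poly_zero:
  fixes P :: "complex poly"
  assumes "\<And>z. norm z = 1 \<Longrightarrow> poly P z = 0"
  shows "P = 0"
proof (rule ccontr)
  assume "P \<noteq> 0"
  then have fin: "finite {z. poly P z = 0}" by (rule poly_roots_finite)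
  define f where "f x = Complex x (sqrt (1 - x^2))" for x
  have "f ` {-1..1} \<subseteq> {z. poly P z = 0}"
  proof
    fix z assume "z \<in> f ` {-1..1}"
    then obtain x where x: "x \<in> {-1..1}" "z = f x" by auto
    have "x^2 \<le> 1" using x(1) by (simp add: abs_square_le_1 abs_le_iff)
    then have "norm z = 1" using x by (simp add: f_def cmod_def)
    then show "z \<in> {z. poly P z = 0}" using assms by simp
  qed
  then have "finite (f ` {-1..1})" using fin finite_subset by blast
  moreover have "inj_on f {-1..1}" by (rule inj_onI) (simp add: f_def complex_eq_iff)
  ultimately have "finite {-1..(1::real)}" using finite_imageD by blast
  then show False using infinite_Icc[of "-1::real" 1] by simp
qed

definition B :: "real list \<Rightarrow> complex \<Rightarrow> complex" where
  "B as z = (\<Prod>a\<leftarrow>as. (1 - of_real a * z) / (z - of_real a))"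

lemma prod_list_div: "(\<Prod>a\<leftarrow>as. f a / g a) = (\<Prod>a\<leftarrow>as. f a) / (\<Prod>a\<leftarrow>as. (g a :: complex))"
  by (induction as) simp_all

lemma prod_inv: "z \<noteq> 0 \<Longrightarrow> z ^ length as * (\<Prod>a\<leftarrow>as. inverse z - of_real a) = (\<Prod>a\<leftarrow>as. 1 - of_real a * (z::complex))"
  by (induction as) (simp_all add: field_simps)

lemma circ_inv: "norm (z::complex) = 1 \<Longrightarrow> inverse z = cnj z"
proof -
  assume "norm z = 1"
  then have "z * cnj z = 1" using complex_norm_square[of z] by simp
  then show ?thesis by (metis inverse_unique)
qed

lemma allpass_structure:
  assumes f: "stable_real_pole_allpass p q n"
  shows "\<exists>as c. length as = n \<and> (\<forall>a\<in>set as. \<bar>a\<bar> < 1) \<and> (c = 1 \<or> c = -1) \<and>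
           (\<forall>z. ratf p q z = of_real c * B as z)"
proof -
  have qnz: "q \<noteq> 0" and cop: "coprime p q" and dpq: "degree p \<le> degree q" and n: "n = degree q"
    and roots: "\<forall>z. poly (cp q) z = 0 \<longrightarrow> z \<in> \<real> \<and> norm z < 1"
    and unit: "\<And>w. norm (ratf p q (cis w)) = 1"
    using f unfolding stable_real_pole_allpass_def by auto
  obtain as where as: "q = smult (lead_coeff q) (\<Prod>a\<leftarrow>as. [:-a,1:])" "length as = degree q"
    "\<forall>a\<in>set as. \<bar>a\<bar> < 1" using real_factor[OF qnz roots] by blast
  define L where "L = lead_coeff q"
  have Lnz: "L \<noteq> 0" using qnz L_def by simp
  define R where "R = smult L (\<Prod>a\<leftarrow>as. [:1,-a:])"
  have evq: "poly (cp q) z = of_real L * (\<Prod>a\<leftarrow>as. z - of_real a)" for z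
    by (subst as(1)) (simp add: cp_smult cp_prod1 L_def)
  have evR: "poly (cp R) z = of_real L * (\<Prod>a\<leftarrow>as. 1 - of_real a * z)" for z
    by (simp add: R_def cp_smult cp_prod2)
  have Rq: "poly (cp R) z = z ^ n * poly (cp q) (inverse z)" if "z \<noteq> 0" for z
    using prod_inv[OF that, of as] by (simp add: evR evq n as(2))
  have circ: "\<exists>w. z = cis w" if "norm z = 1" for z
    using that cis_Arg[of z] by (intro exI[of _ "Arg z"]) (auto simp: sgn_div_norm, metis norm_zero zero_neq_one)
  have qcirc: "poly (cp q) z \<noteq> 0" if "norm z = 1" for z
    using roots that by force
  have pq: "norm (poly (cp p) z) = norm (poly (cp q) z)" if z1: "norm z = 1" for z
  proof -
    obtain w where "z = cis w" using circ z1 by blast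
    then have "norm (ratf p q z) = 1" using unit by simp
    then show ?thesis using qcirc[OF z1] by (simp add: ratf_def norm_divide)
  qed
  have pnz: "p \<noteq> 0" using pq[of 1] qcirc[of 1] by auto
  define pt where "pt = reflect_poly p * monom 1 (n - degree p)"
  have evpt: "poly (cp pt) z = z ^ n * poly (cp p) (inverse z)" if "z \<noteq> 0" for z
  proof -
    have "poly (cp pt) z = z ^ degree p * poly (cp p) (inverse z) * z ^ (n - degree p)"
      unfolding pt_def cp_mult cp_reflect cp_monom poly_mult poly_reflect_poly_nz[OF that]
      by (simp add: degree_map_poly poly_monom)
    also have "\<dots> = z ^ n * poly (cp p) (inverse z)"
      using dpq n by (simp add: power_add[symmetric] mult_ac)
    finally show ?thesis .
  qed
  have key: "p * pt = R * q"
  proof -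
    have "cp (p * pt - R * q) = 0"
    proof (rule circle_poly_zero)
      fix z :: complex assume z1: "norm z = 1"
      then have znz: "z \<noteq> 0" by auto
      have "poly (cp p) z * poly (cp pt) z = z ^ n * (poly (cp p) z * cnj (poly (cp p) z))"
        using evpt[OF znz] circ_inv[OF z1] cp_cnj[of p z] by simp
      also have "\<dots> = z ^ n * of_real ((norm (poly (cp p) z))^2)"
        by (simp only: complex_norm_square)
      also have "\<dots> = z ^ n * of_real ((norm (poly (cp q) z))^2)" using pq[OF z1] by simp
      also have "\<dots> = z ^ n * (poly (cp q) z * cnj (poly (cp q) z))"
        by (simp only: complex_norm_square)
      also have "\<dots> = poly (cp R) z * poly (cp q) z"
        using Rq[OF znz] circ_inv[OF z1] cp_cnj[of q z] by simp
      finally show "poly (cp (p * pt - R * q)) z = 0" by (simp add: cp_diff cp_mult)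
    qed
    then show ?thesis by (simp add: cp_eq0)
  qed
  have "p dvd R * q" using key by (metis dvd_triv_left)
  then have "p dvd R" using cop by (metis coprime_dvd_mult_left_iff)
  then obtain s where s: "R = p * s" by (elim dvdE)
  have pts: "pt = s * q" using key s pnz by (simp add: mult_ac)
  have ptnz: "pt \<noteq> 0" using pnz by (simp add: pt_def)
  then have snz: "s \<noteq> 0" using pts by auto
  have "degree pt \<le> n"
  proof -
    have "degree pt \<le> degree (reflect_poly p) + degree (monom (1::real) (n - degree p))"
      unfolding pt_def by (rule degree_mult_le)
    also have "\<dots> \<le> degree p + (n - degree p)" using degree_reflect_poly_le[of p]
      by (simp add: degree_monom_eq)
    finally show ?thesis using dpq n by simp
  qed
  moreover have "degree pt = degree s + n" using pts snz qnz n by (simp add: degree_mult_eq)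
  ultimately have "degree s = 0" by simp
  then obtain c where sc: "s = [:c:]" by (metis degree_0_id)
  have Rc: "R = smult c p" using s sc by simp
  have "norm (poly (cp R) 1) = norm (poly (cp q) 1)"
    using Rq[of 1] by simp
  also have "\<dots> = norm (poly (cp p) 1)" using pq[of 1] by simp
  finally have "\<bar>c\<bar> * norm (poly (cp p) 1) = norm (poly (cp p) 1)"
    by (simp add: Rc cp_smult norm_mult)
  moreover have "poly (cp p) 1 \<noteq> 0" using pq[of 1] qcirc[of 1] by auto
  ultimately have c1: "\<bar>c\<bar> = 1" by simp
  then have "c * c = 1" by (metis abs_mult_self_eq mult_1)
  then have pR: "p = smult c R" using Rc by simp
  show ?thesis
  proof (intro exI[of _ as] exI[of _ c] conjI allI)
    fix z
    have "ratf p q z = of_real c * (of_real L * (\<Prod>a\<leftarrow>as. 1 - of_real a * z)) /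
                        (of_real L * (\<Prod>a\<leftarrow>as. z - of_real a))"
      unfolding ratf_def pR cp_smult poly_smult evR evq by simp
    also have "\<dots> = of_real c * B as z"
      using Lnz by (simp add: B_def prod_list_div)
    finally show "ratf p q z = of_real c * B as z" .
  next
    show "c = 1 \<or> c = -1" using c1 by (cases "c < 0") auto
  qed (use as n in auto)
qed

definition g :: "real \<Rightarrow> complex \<Rightarrow> complex" where
  "g a z = (1 - of_real a * z) / (z - of_real a)"

definition tt :: "real \<Rightarrow> complex \<Rightarrow> real" where
  "tt a z = (1 - a^2) / (norm (1 - of_real a * z))^2"

lemma g_facts:
  assumes z1: "norm z = 1" and a1: "\<bar>a\<bar> < 1"
  shows "(g a has_field_derivative (- g a z * of_real (tt a z) / z)) (at z)"
    and "norm (g a z) = 1"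
    and "\<bar>Im (g a z)\<bar> = tt a z * \<bar>Im z\<bar>"
proof -
  have znz: "z \<noteq> 0" using z1 by auto
  have cz: "cnj z = inverse z" using circ_inv[OF z1] by simp
  have za: "z - of_real a \<noteq> 0"
  proof
    assume "z - of_real a = 0"
    then have "norm z = \<bar>a\<bar>" by (metis eq_iff_diff_eq_0 norm_of_real)
    then show False using z1 a1 by simp
  qed
  have aza: "1 - of_real a * z \<noteq> 0"
  proof
    assume "1 - of_real a * z = 0"
    then have "norm (of_real a * z) = 1" by (metis eq_iff_diff_eq_0 norm_one)
    then show False using z1 a1 by (simp add: norm_mult)
  qed
  define D where "D = (norm (1 - of_real a * z))^2"
  have Dc: "of_real D = (1 - of_real a * z) * (z - of_real a) / z"
  proof -
    have "of_real D = (1 - of_real a * z) * cnj (1 - of_real a * z)"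
      unfolding D_def by (rule complex_norm_square)
    also have "\<dots> = (1 - of_real a * z) * (z - of_real a) / z"
      using znz by (simp add: cz field_simps)
    finally show ?thesis .
  qed
  have Dpos: "D > 0" using aza D_def by simp
  have tD: "tt a z = (1 - a^2) / D" by (simp add: tt_def D_def)
  have "((\<lambda>z. (1 - of_real a * z) / (z - of_real a)) has_field_derivative
        ((- of_real a) * (z - of_real a) - (1 - of_real a * z)) / (z - of_real a)^2) (at z)"
    apply (rule derivative_eq_intros refl)+
    using za by (auto simp: power2_eq_square)
  moreover have "((- of_real a) * (z - of_real a) - (1 - of_real a * z)) / (z - of_real a)^2
      = - g a z * of_real (tt a z) / z"
  proof -
    have ttc: "of_real (tt a z) = of_real (1 - a^2) * z / ((1 - of_real a * z) * (z - of_real a))"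
      unfolding tD of_real_divide Dc using znz za aza by (simp add: field_simps)
    have ab: "\<And>A Bz c z::complex. A \<noteq> 0 \<Longrightarrow> Bz \<noteq> 0 \<Longrightarrow> z \<noteq> 0 \<Longrightarrow>
       - (A/Bz) * (c*z/(A*Bz)) / z = - c/(Bz*Bz)" by (simp add: field_simps)
    have num: "(- of_real a) * (z - of_real a) - (1 - of_real a * z) = - (of_real (1 - a^2) :: complex)"
      by (simp add: algebra_simps power2_eq_square)
    show ?thesis unfolding ttc g_def num ab[OF aza za znz] by (simp add: power2_eq_square)
  qed
  ultimately show "(g a has_field_derivative (- g a z * of_real (tt a z) / z)) (at z)"
    unfolding g_def[abs_def] by simp
  have "(norm (z - of_real a))^2 = D"
  proof -
    have "of_real ((norm (z - of_real a))^2) = (z - of_real a) * cnj (z - of_real a)"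
      by (rule complex_norm_square)
    also have "\<dots> = of_real D" using znz by (simp add: Dc cz field_simps)
    finally show ?thesis by (simp only: of_real_eq_iff)
  qed
  then have "norm (z - of_real a) = norm (1 - of_real a * z)" unfolding D_def
    by (metis norm_ge_zero power2_eq_imp_eq)
  then show "norm (g a z) = 1" using za aza by (simp add: g_def norm_divide)
  have gform: "g a z = (cnj z - 2 * of_real a + of_real (a^2) * z) / of_real D"
  proof -
    have ab: "\<And>A Bz X z::complex. A \<noteq> 0 \<Longrightarrow> Bz \<noteq> 0 \<Longrightarrow> z \<noteq> 0 \<Longrightarrow> A * A * Bz = X * z * Bz \<Longrightarrow>
       A / Bz = X / (A * Bz / z)" by (simp add: field_simps)
    show ?thesis unfolding g_def Dc cz
      by (rule ab[OF aza za znz]) (use znz in \<open>simp add: field_simps power2_eq_square\<close>)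
  qed
  have "Im (g a z) = - (1 - a^2) * Im z / D"
    unfolding gform using Dpos by (simp add: Im_divide algebra_simps power2_eq_square) (simp add: field_simps)
  moreover have "\<bar>1 - a^2\<bar> = 1 - a^2" using a1 abs_square_less_1[of a] by simp
  ultimately show "\<bar>Im (g a z)\<bar> = tt a z * \<bar>Im z\<bar>"
    using Dpos a1 by (simp add: tD abs_mult abs_divide abs_square_less_1 power2_eq_square[symmetric]
       abs_minus_commute) 
qed

definition TT :: "real list \<Rightarrow> complex \<Rightarrow> real" where
  "TT as z = (\<Sum>a\<leftarrow>as. tt a z)"

lemma B_Cons: "B (a#as) = (\<lambda>z. g a z * B as z)"
  by (simp add: B_def g_def fun_eq_iff)

lemma B_Nil: "B [] = (\<lambda>z. 1)"
  by (simp add: B_def fun_eq_iff)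

lemma B_good:
  assumes z1: "norm z = 1" and as: "\<forall>a\<in>set as. \<bar>a\<bar> < 1"
  shows "(B as has_field_derivative (- B as z * of_real (TT as z) / z)) (at z)
    \<and> norm (B as z) = 1 \<and> \<bar>Im (B as z)\<bar> \<le> TT as z * \<bar>Im z\<bar>
    \<and> (length as \<le> 1 \<longrightarrow> \<bar>Im (B as z)\<bar> = TT as z * \<bar>Im z\<bar>)"
  using as
proof (induction as)
  case Nil
  then show ?case by (simp add: B_Nil TT_def)
next
  case (Cons a as)
  have a1: "\<bar>a\<bar> < 1" using Cons.prems by simp
  have IH: "(B as has_field_derivative (- B as z * of_real (TT as z) / z)) (at z)"
    "norm (B as z) = 1" "\<bar>Im (B as z)\<bar> \<le> TT as z * \<bar>Im z\<bar>"
    "length as \<le> 1 \<longrightarrow> \<bar>Im (B as z)\<bar> = TT as z * \<bar>Im z\<bar>"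
    using Cons by auto
  note G = g_facts[OF z1 a1]
  have TT: "TT (a#as) z = tt a z + TT as z" by (simp add: TT_def)
  have "((\<lambda>z. g a z * B as z) has_field_derivative
          (- g a z * of_real (tt a z) / z) * B as z + (- B as z * of_real (TT as z) / z) * g a z) (at z)"
    by (rule DERIV_mult[OF G(1) IH(1)])
  moreover have "(- g a z * of_real (tt a z) / z) * B as z + (- B as z * of_real (TT as z) / z) * g a z
     = - (g a z * B as z) * of_real (TT (a#as) z) / z"
    unfolding TT by (simp add: algebra_simps diff_divide_distrib add_divide_distrib)
  ultimately have D: "(B (a#as) has_field_derivative (- B (a#as) z * of_real (TT (a#as) z) / z)) (at z)"
    unfolding B_Cons by simp
  have N: "norm (B (a#as) z) = 1" unfolding B_Cons using G(2) IH(2) by (simp add: norm_mult)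
  have ImE: "Im (B (a#as) z) = Re (g a z) * Im (B as z) + Im (g a z) * Re (B as z)"
    unfolding B_Cons by simp
  have r1: "\<bar>Re (g a z)\<bar> \<le> 1" using G(2) abs_Re_le_cmod by metis
  have r2: "\<bar>Re (B as z)\<bar> \<le> 1" using IH(2) abs_Re_le_cmod by metis
  have "\<bar>Im (B (a#as) z)\<bar> \<le> \<bar>Re (g a z)\<bar> * \<bar>Im (B as z)\<bar> + \<bar>Im (g a z)\<bar> * \<bar>Re (B as z)\<bar>"
    unfolding ImE by (metis abs_mult abs_triangle_ineq)
  also have "\<dots> \<le> 1 * \<bar>Im (B as z)\<bar> + \<bar>Im (g a z)\<bar> * 1"
    by (intro add_mono mult_mono r1 r2) auto
  also have "\<dots> \<le> TT (a#as) z * \<bar>Im z\<bar>" using IH(3) G(3) by (simp add: TT algebra_simps)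
  finally have I: "\<bar>Im (B (a#as) z)\<bar> \<le> TT (a#as) z * \<bar>Im z\<bar>" .
  have E: "\<bar>Im (B (a#as) z)\<bar> = TT (a#as) z * \<bar>Im z\<bar>" if "length (a#as) \<le> 1"
  proof -
    have "as = []" using that by simp
    then show ?thesis using G(3) by (simp add: B_Cons B_Nil TT_def)
  qed
  show ?case using D N I E by blast
qed

lemma cis_vderiv: "(cis has_vector_derivative (\<i> * cis x)) (at x)"
proof -
  have "((\<lambda>x. cis x) has_derivative (\<lambda>t. t *\<^sub>R (\<i> * cis x))) (at x)"
    using has_derivative_cis[of "\<lambda>x. x" "\<lambda>t. t" x UNIV] by (simp add: has_derivative_ident)
  then show ?thesis by (simp add: has_vector_derivative_def)
qed

lemma Im_vderiv:
  assumes "(F has_vector_derivative F') (at x)"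
  shows "((\<lambda>x. Im (F x)) has_real_derivative Im F') (at x)"
proof -
  have "(F has_derivative (\<lambda>t. t *\<^sub>R F')) (at x)" using assms by (simp add: has_vector_derivative_def)
  from bounded_linear.has_derivative[OF bounded_linear_Im this]
  have "((\<lambda>x. Im (F x)) has_derivative (\<lambda>t. Im (t *\<^sub>R F'))) (at x)" .
  moreover have "(\<lambda>t. Im (t *\<^sub>R F')) = (*) (Im F')" by (auto simp: fun_eq_iff)
  ultimately show ?thesis by (simp add: has_field_derivative_def)
qed

lemma lift_deriv:
  fixes \<theta> :: "real \<Rightarrow> real" and G :: "real \<Rightarrow> complex"
  assumes cont: "isCont \<theta> w0" and eq: "\<And>w. G w = cis (\<theta> w)"
    and dG: "(G has_vector_derivative G') (at w0)"
  shows "(\<theta> has_real_derivative Im (G' / G w0)) (at w0)"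
proof -
  define h where "h w = \<theta> w0 + Im (Ln (G w / G w0))" for w
  have G0: "G w0 \<noteq> 0" using eq by simp
  have ev: "eventually (\<lambda>w. dist (\<theta> w) (\<theta> w0) < pi) (nhds w0)"
  proof -
    have "eventually (\<lambda>w. dist (\<theta> w) (\<theta> w0) < pi) (at w0)"
      using cont unfolding isCont_def by (rule tendstoD) simp
    then show ?thesis by (simp add: eventually_nhds_conv_at)
  qed
  have ev2: "eventually (\<lambda>w. \<theta> w = h w) (nhds w0)"
    using ev
  proof eventually_elim
    case (elim w)
    then have r: "\<theta> w - \<theta> w0 \<in> {-pi<..pi}" by (auto simp: dist_real_def abs_less_iff)
    have "G w / G w0 = cis (\<theta> w - \<theta> w0)" by (simp add: eq cis_divide)
    then have "Im (Ln (G w / G w0)) = \<theta> w - \<theta> w0" using Ln_cis[OF r] by simp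
    then show ?case by (simp add: h_def)
  qed
  have dq: "((\<lambda>w. G w / G w0) has_vector_derivative G' / G w0) (at w0)"
    using has_vector_derivative_divide[OF dG] by simp
  have "1 \<notin> \<real>\<^sub>\<le>\<^sub>0" by simp
  then have dLn: "(Ln has_field_derivative 1) (at ((\<lambda>w. G w / G w0) w0))"
    using has_field_derivative_Ln[of 1] G0 by simp
  have "((Ln \<circ> (\<lambda>w. G w / G w0)) has_vector_derivative (G' / G w0 * 1)) (at w0)"
    by (rule field_vector_diff_chain_at[OF dq dLn])
  from Im_vderiv[OF this]
  have "((\<lambda>w. Im (Ln (G w / G w0))) has_real_derivative Im (G' / G w0)) (at w0)"
    by (simp add: o_def)
  from DERIV_add[OF DERIV_const[of "\<theta> w0" "at w0"] this]
  have "(h has_real_derivative Im (G' / G w0)) (at w0)"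
    unfolding h_def[abs_def] by simp
  then show ?thesis
    using DERIV_cong_ev[OF refl ev2 refl] by simp
qed

theorem lemma3:
  fixes p q :: "real poly" and n :: nat and \<theta> :: "real \<Rightarrow> real" and wp :: real
  assumes f: "stable_real_pole_allpass p q n"
    and \<theta>_cont: "continuous_on UNIV \<theta>"
    and \<theta>_arg: "\<And>w. ratf p q (cis w) = cis (\<theta> w)"
    and wp: "wp \<in> {-pi<..<pi} - {0}"
  shows "\<theta> differentiable (at wp)
         \<and> deriv \<theta> wp \<le> - \<bar>sin (\<theta> wp) / sin wp\<bar>
         \<and> ((n = 0 \<or> n = 1) \<longrightarrow> deriv \<theta> wp = - \<bar>sin (\<theta> wp) / sin wp\<bar>)"
proof -
  obtain as c where as: "length as = n" "\<forall>a\<in>set as. \<bar>a\<bar> < 1" "c = 1 \<or> c = -1"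
    "\<forall>z. ratf p q z = of_real c * B as z"
    using allpass_structure[OF f] by blast
  define z0 where "z0 = cis wp"
  have z1: "norm z0 = 1" by (simp add: z0_def)
  have z0nz: "z0 \<noteq> 0" using z1 by auto
  note BG = B_good[OF z1 as(2)]
  define B' where "B' = - B as z0 * of_real (TT as z0) / z0"
  have dB: "(B as has_field_derivative B') (at z0)" using BG by (simp add: B'_def)
  have dF: "((\<lambda>z. of_real c * B as z) has_field_derivative (of_real c * B')) (at (cis wp))"
    using DERIV_cmult[OF dB, of "of_real c"] by (simp add: z0_def)
  have Geq: "(\<lambda>w. ratf p q (cis w)) = (\<lambda>z. of_real c * B as z) \<circ> cis"
    using as(4) by (simp add: fun_eq_iff)
  have dG: "((\<lambda>w. ratf p q (cis w)) has_vector_derivative (\<i> * cis wp * (of_real c * B'))) (at wp)"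
    unfolding Geq by (rule field_vector_diff_chain_at[OF cis_vderiv dF])
  have cont: "isCont \<theta> wp" using \<theta>_cont continuous_on_eq_continuous_at[of UNIV \<theta>] by simp
  have D: "(\<theta> has_real_derivative Im ((\<i> * cis wp * (of_real c * B')) / ratf p q (cis wp))) (at wp)"
    by (rule lift_deriv[OF cont \<theta>_arg dG])
  have cnz: "c \<noteq> 0" using as(3) by auto
  have Bnz: "B as z0 \<noteq> 0" using BG by auto
  have "(\<i> * cis wp * (of_real c * B')) / ratf p q (cis wp) = - \<i> * of_real (TT as z0)"
    using cnz Bnz z0nz unfolding as(4)[rule_format] B'_def z0_def[symmetric] by (simp add: field_simps)
  then have D2: "(\<theta> has_real_derivative - TT as z0) (at wp)" using D by simp
  have dth: "deriv \<theta> wp = - TT as z0" using DERIV_imp_deriv[OF D2] .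
  have diff: "\<theta> differentiable (at wp)"
    using differentiableI[OF has_field_derivative_imp_has_derivative[OF D2]] .
  have "sin (\<theta> wp) = Im (cis (\<theta> wp))" by simp
  also have "\<dots> = Im (of_real c * B as z0)"
    using \<theta>_arg[of wp] as(4) unfolding z0_def by metis
  also have "\<dots> = c * Im (B as z0)" by simp
  finally have sth: "\<bar>sin (\<theta> wp)\<bar> = \<bar>Im (B as z0)\<bar>" using as(3) by auto
  have sw: "\<bar>sin wp\<bar> = \<bar>Im z0\<bar>" by (simp add: z0_def)
  have swnz: "sin wp \<noteq> 0" using wp sin_eq_0_pi[of wp] by auto
  have ineq: "\<bar>sin (\<theta> wp) / sin wp\<bar> \<le> TT as z0"
    using BG swnz unfolding abs_divide sth sw by (simp add: divide_le_eq z0_def)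
  have eqn: "\<bar>sin (\<theta> wp) / sin wp\<bar> = TT as z0" if "n = 0 \<or> n = 1"
    using BG swnz that as(1) unfolding abs_divide sth sw by (auto simp: z0_def)
  show ?thesis using diff dth ineq eqn by auto
qed
end
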